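(* Let $I\subset\mathbb R$ be a bounded closed non-degenerate interval, $r>1$, and $f,g\in L^r(I)$ with $f\le g$. Then $\tau_r^f\le\tau_r^g$, and $\tau_r^f=\tau_r^g$ if and only if $f=g$ a.e.
   Context: For $h\in L^r(I)$ with $r>1$, $\tau_r^h$ denotes the unique real number minimizing $t\mapsto\|h-t\|_{L^r(I)}$. *)

theory Defs
  imports "HOL-Analysis.Analysis"
begin

definition in_Lr :: "real \<Rightarrow> real set \<Rightarrow> (real \<Rightarrow> real) \<Rightarrow> bool" where
  "in_Lr r I h \<longleftrightarrow> h \<in> borel_measurable (lebesgue_on I) \<and>
     integrable (lebesgue_on I) (\<lambda>x. \<bar>h x\<bar> powr r)"

definition Lr_norm :: "real \<Rightarrow> real set \<Rightarrow> (real \<Rightarrow> real) \<Rightarrow> real" where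
  "Lr_norm r I h = (integral\<^sup>L (lebesgue_on I) (\<lambda>x. \<bar>h x\<bar> powr r)) powr (1 / r)"

definition tau :: "real \<Rightarrow> real set \<Rightarrow> (real \<Rightarrow> real) \<Rightarrow> real" where
  "tau r I h = (THE t. \<forall>s. Lr_norm r I (\<lambda>x. h x - t) \<le> Lr_norm r I (\<lambda>x. h x - s))"

end

theory Submission
  imports Defs
begin

definition psi :: "real \<Rightarrow> real \<Rightarrow> real" where
  "psi r u = max u 0 powr (r - 1) - max (-u) 0 powr (r - 1)"

lemma psi_pos: "u \<ge> 0 \<Longrightarrow> r > 1 \<Longrightarrow> psi r u = u powr (r-1)"
  by (simp add: psi_def max_def)

lemma psi_neg: "u \<le> 0 \<Longrightarrow> r > 1 \<Longrightarrow> psi r u = - ((-u) powr (r-1))"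
  by (simp add: psi_def max_def)

lemma psi_abs: "r > 1 \<Longrightarrow> \<bar>psi r u\<bar> = \<bar>u\<bar> powr (r-1)"
  by (cases "u \<ge> 0") (auto simp: psi_pos psi_neg)

lemma psi_mono_strict:
  assumes "r > 1" "u < v" shows "psi r u < psi r v"
proof -
  consider "0 \<le> u" | "u < 0" "0 \<le> v" | "v < 0" using assms by linarith
  then show ?thesis
  proof cases
    case 1 then show ?thesis using assms by (simp add: psi_pos powr_less_mono2)
  next
    case 2 then show ?thesis using assms
    proof -
      have "psi r u < 0" using 2 assms by (simp add: psi_neg)
      moreover have "psi r v \<ge> 0" using 2 assms by (simp add: psi_pos)
      ultimately show ?thesis by linarith
    qed
  next
    case 3 then show ?thesis using assms by (simp add: psi_neg powr_less_mono2)
  qed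
qed

lemma psi_mono: "r > 1 \<Longrightarrow> u \<le> v \<Longrightarrow> psi r u \<le> psi r v"
  using psi_mono_strict[of r u v] by (cases "u = v") auto

lemma psi_cont: assumes "r > 1" shows "continuous_on UNIV (psi r)"
  unfolding psi_def
  by (intro continuous_on_diff continuous_on_powr') (auto intro!: continuous_intros simp: assms)

lemma phi_deriv:
  assumes r: "r > 1"
  shows "((\<lambda>u. \<bar>u\<bar> powr r) has_real_derivative r * psi r u) (at u)"
proof -
  consider "u > 0" | "u < 0" | "u = 0" by linarith
  then show ?thesis
  proof cases
    case 1
    have ev: "eventually (\<lambda>y. \<bar>y\<bar> powr r = y powr r) (nhds u)"
      using eventually_nhds_in_open[of "{0<..}" u] 1
      by (auto elim!: eventually_mono)
    show ?thesis
      apply (subst DERIV_cong_ev[OF refl ev refl])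
      using has_real_derivative_powr[OF 1, of r] 1 r by (simp add: psi_pos)
  next
    case 2
    have ev: "eventually (\<lambda>y. \<bar>y\<bar> powr r = (-y) powr r) (nhds u)"
      using eventually_nhds_in_open[of "{..<0}" u] 2
      by (auto elim!: eventually_mono)
    have "((\<lambda>y. (-y) powr r) has_real_derivative r * (-u) powr (r-1) * (-1)) (at u)"
      using 2 by (auto intro!: derivative_eq_intros)
    then show ?thesis
      apply (subst DERIV_cong_ev[OF refl ev refl])
      using 2 r by (simp add: psi_neg)
  next
    case 3
    have lim: "((\<lambda>h. \<bar>h\<bar> powr (r-1)) \<longlongrightarrow> 0) (at 0)"
      using r by (intro tendsto_zero_powrI) (auto intro!: tendsto_eq_intros)
    have "((\<lambda>h. (\<bar>0 + h\<bar> powr r - \<bar>0\<bar> powr r) / h) \<longlongrightarrow> 0) (at 0)"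
    proof (rule tendsto_rabs_zero_cancel)
      show "((\<lambda>h. \<bar>(\<bar>0 + h\<bar> powr r - \<bar>0\<bar> powr r) / h\<bar>) \<longlongrightarrow> 0) (at 0)"
      proof (rule Lim_transform_eventually[OF lim])
        show "\<forall>\<^sub>F h in at 0. \<bar>h\<bar> powr (r-1) = \<bar>(\<bar>0 + h\<bar> powr r - \<bar>0\<bar> powr r) / h\<bar>"
          using r by (auto simp: eventually_at_filter powr_diff abs_divide)
      qed
    qed
    then show ?thesis using 3 r
      by (simp add: DERIV_def psi_def)
  qed
qed

lemma phi_grad_strict:
  assumes r: "r > 1" and "v \<noteq> u"
  shows "\<bar>v\<bar> powr r > \<bar>u\<bar> powr r + r * psi r u * (v - u)"
proof (cases "u < v")
  case True
  obtain z where z: "u < z" "z < v" "\<bar>v\<bar> powr r - \<bar>u\<bar> powr r = (v - u) * (r * psi r z)"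
    using MVT2[OF True, of "\<lambda>u. \<bar>u\<bar> powr r" "\<lambda>u. r * psi r u"] phi_deriv[OF r] by blast
  have "psi r u < psi r z" using psi_mono_strict[OF r z(1)] .
  then have "(v - u) * (r * psi r u) < (v - u) * (r * psi r z)" using True r by simp
  then show ?thesis using z(3) by (simp add: algebra_simps)
next
  case False
  then have vu: "v < u" using assms by linarith
  obtain z where z: "v < z" "z < u" "\<bar>u\<bar> powr r - \<bar>v\<bar> powr r = (u - v) * (r * psi r z)"
    using MVT2[OF vu, of "\<lambda>u. \<bar>u\<bar> powr r" "\<lambda>u. r * psi r u"] phi_deriv[OF r] by blast
  have "psi r z < psi r u" using psi_mono_strict[OF r z(2)] .
  then have "(u - v) * (r * psi r z) < (u - v) * (r * psi r u)" using vu r by simp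
  then show ?thesis using z(3) by (simp add: algebra_simps)
qed

lemma phi_grad:
  assumes r: "r > 1"
  shows "\<bar>v\<bar> powr r \<ge> \<bar>u\<bar> powr r + r * psi r u * (v - u)"
  using phi_grad_strict[OF r, of v u] by (cases "v = u") auto

lemma phi_convex:
  fixes u v r l :: real
  assumes r: "r > 1" and l: "0 \<le> l" "l \<le> 1"
  shows "\<bar>(1 - l) * u + l * v\<bar> powr r \<le> (1 - l) * \<bar>u\<bar> powr r + l * \<bar>v\<bar> powr r"
proof -
  define m where "m = (1 - l) * u + l * v"
  have 1: "\<bar>u\<bar> powr r \<ge> \<bar>m\<bar> powr r + r * psi r m * (u - m)" by (rule phi_grad[OF r])
  have 2: "\<bar>v\<bar> powr r \<ge> \<bar>m\<bar> powr r + r * psi r m * (v - m)" by (rule phi_grad[OF r])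
  have "(1 - l) * \<bar>u\<bar> powr r + l * \<bar>v\<bar> powr r \<ge>
     (1 - l) * (\<bar>m\<bar> powr r + r * psi r m * (u - m)) + l * (\<bar>m\<bar> powr r + r * psi r m * (v - m))"
    using 1 2 l by (intro add_mono mult_left_mono) auto
  also have "(1 - l) * (\<bar>m\<bar> powr r + r * psi r m * (u - m)) + l * (\<bar>m\<bar> powr r + r * psi r m * (v - m))
     = \<bar>m\<bar> powr r + r * psi r m * ((1 - l) * u + l * v - m)"
    by (simp add: algebra_simps)
  also have "\<dots> = \<bar>m\<bar> powr r" by (simp add: m_def)
  finally show ?thesis by (simp add: m_def)
qed

lemma phi_mid_strict:
  fixes u v r :: real
  assumes r: "r > 1" and "u \<noteq> v"
  shows "\<bar>(u + v) / 2\<bar> powr r < (\<bar>u\<bar> powr r + \<bar>v\<bar> powr r) / 2"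
proof -
  define m where "m = (u + v) / 2"
  have "u \<noteq> m" "v \<noteq> m" using assms by (auto simp: m_def)
  then have 1: "\<bar>u\<bar> powr r > \<bar>m\<bar> powr r + r * psi r m * (u - m)"
    and 2: "\<bar>v\<bar> powr r > \<bar>m\<bar> powr r + r * psi r m * (v - m)"
    by (auto intro: phi_grad_strict[OF r])
  have "(u - m) + (v - m) = 0" by (simp add: m_def)
  then have "r * psi r m * (u - m) + r * psi r m * (v - m) = 0"
    by (metis distrib_left mult_zero_right)
  then show ?thesis using 1 2 by (simp add: m_def)
qed

lemma phi_submod:
  fixes x y s t r :: real
  assumes r: "r > 1" and "x \<le> y" "s \<le> t"
  shows "\<bar>x - s\<bar> powr r + \<bar>y - t\<bar> powr r \<le> \<bar>x - t\<bar> powr r + \<bar>y - s\<bar> powr r"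
proof -
  define d where "d = t - s"
  define w where "w = (\<lambda>z. \<bar>z + d\<bar> powr r - \<bar>z\<bar> powr r)"
  have "w (x - t) \<le> w (y - t)"
  proof (rule DERIV_nonneg_imp_nondecreasing[of "x - t" "y - t" w])
    show "x - t \<le> y - t" using assms by simp
    fix z :: real
    have "(w has_real_derivative (r * psi r (z + d) * 1 - r * psi r z)) (at z)"
      unfolding w_def
    proof (intro DERIV_diff)
      show "((\<lambda>z. \<bar>z + d\<bar> powr r) has_real_derivative r * psi r (z + d) * 1) (at z)"
        by (rule DERIV_chain2[of "\<lambda>u. \<bar>u\<bar> powr r", OF phi_deriv[OF r]])
           (auto intro!: derivative_eq_intros)
    qed (rule phi_deriv[OF r])
    moreover have "r * psi r (z + d) * 1 - r * psi r z \<ge> 0"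
      using psi_mono[OF r, of z "z + d"] r assms by (simp add: d_def)
    ultimately show "\<exists>y. DERIV w z :> y \<and> y \<ge> 0" by blast
  qed
  then show ?thesis by (simp add: w_def d_def)
qed

lemma pw_bound:
  fixes x y r :: real
  assumes "r > 0"
  shows "\<bar>x + y\<bar> powr r \<le> 2 powr r * (\<bar>x\<bar> powr r + \<bar>y\<bar> powr r)"
proof -
  have "\<bar>x + y\<bar> \<le> 2 * max \<bar>x\<bar> \<bar>y\<bar>" by linarith
  then have "\<bar>x + y\<bar> powr r \<le> (2 * max \<bar>x\<bar> \<bar>y\<bar>) powr r"
    using assms by (intro powr_mono2) auto
  also have "\<dots> = 2 powr r * max \<bar>x\<bar> \<bar>y\<bar> powr r" by (simp add: powr_mult)
  also have "max \<bar>x\<bar> \<bar>y\<bar> powr r \<le> \<bar>x\<bar> powr r + \<bar>y\<bar> powr r"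
    by (cases "\<bar>x\<bar> \<le> \<bar>y\<bar>") (auto simp: max_def)
  then have "2 powr r * max \<bar>x\<bar> \<bar>y\<bar> powr r \<le> 2 powr r * (\<bar>x\<bar> powr r + \<bar>y\<bar> powr r)"
    by (intro mult_left_mono) auto
  finally show ?thesis .
qed

lemma powr_m1_bound:
  fixes z r :: real
  assumes "r > 1" "z \<ge> 0"
  shows "z powr (r - 1) \<le> 1 + z powr r"
proof (cases "z \<le> 1")
  case True
  then have "z powr (r - 1) \<le> 1" using assms by (intro powr_le1) auto
  then show ?thesis by (smt (verit) powr_ge_zero)
next
  case False
  then have "z powr (r - 1) \<le> z powr r" using assms by (intro powr_mono) auto
  then show ?thesis by linarith
qed

lemma psi_measurable[measurable]:
  assumes [measurable]: "f \<in> borel_measurable M"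
  shows "(\<lambda>x. psi r (f x)) \<in> borel_measurable M"
  unfolding psi_def by measurable

lemma fin_M: "finite_measure (lebesgue_on {a..b::real})"
  by (rule finite_measure_lebesgue_on) auto

lemma int_shift:
  assumes r: "r > 1" and h: "in_Lr r {a..b} h"
  shows "integrable (lebesgue_on {a..b}) (\<lambda>x. \<bar>h x + c\<bar> powr r)"
proof (rule Bochner_Integration.integrable_bound)
  interpret finite_measure "lebesgue_on {a..b}" by (rule fin_M)
  have hm[measurable]: "h \<in> borel_measurable (lebesgue_on {a..b})" using h by (simp add: in_Lr_def)
  have hi: "integrable (lebesgue_on {a..b}) (\<lambda>x. \<bar>h x\<bar> powr r)" using h by (simp add: in_Lr_def)
  show "integrable (lebesgue_on {a..b}) (\<lambda>x. 2 powr r * (\<bar>h x\<bar> powr r + \<bar>c\<bar> powr r))"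
    using hi by (intro integrable_mult_right Bochner_Integration.integrable_add) auto
  show "(\<lambda>x. \<bar>h x + c\<bar> powr r) \<in> borel_measurable (lebesgue_on {a..b})" by measurable
  show "AE x in lebesgue_on {a..b}. norm (\<bar>h x + c\<bar> powr r) \<le> norm (2 powr r * (\<bar>h x\<bar> powr r + \<bar>c\<bar> powr r))"
    using pw_bound[of r "h _" c] r by auto
qed

lemma int_psi:
  assumes r: "r > 1" and h: "in_Lr r {a..b} h"
  shows "integrable (lebesgue_on {a..b}) (\<lambda>x. psi r (h x + c))"
proof (rule Bochner_Integration.integrable_bound)
  interpret finite_measure "lebesgue_on {a..b}" by (rule fin_M)
  have hm[measurable]: "h \<in> borel_measurable (lebesgue_on {a..b})" using h by (simp add: in_Lr_def)
  show "integrable (lebesgue_on {a..b}) (\<lambda>x. 1 + \<bar>h x + c\<bar> powr r)"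
    using int_shift[OF r h] by (intro Bochner_Integration.integrable_add) auto
  show "(\<lambda>x. psi r (h x + c)) \<in> borel_measurable (lebesgue_on {a..b})" by measurable
  show "AE x in lebesgue_on {a..b}. norm (psi r (h x + c)) \<le> norm (1 + \<bar>h x + c\<bar> powr r)"
    using powr_m1_bound[OF r, of "\<bar>h _ + c\<bar>"] r by (auto simp: psi_abs)
qed

lemma int_shift':
  assumes r: "r > 1" and h: "in_Lr r {a..b} h"
  shows "integrable (lebesgue_on {a..b}) (\<lambda>x. \<bar>h x - t\<bar> powr r)"
  using int_shift[OF r h, of "-t"] by simp

lemma not_AE_False:
  assumes "a < (b::real)"
  shows "\<not> (AE x in lebesgue_on {a..b}. False)"
proof
  assume "AE x in lebesgue_on {a..b}. False"
  then have "emeasure (lebesgue_on {a..b}) (space (lebesgue_on {a..b})) = 0"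
    using ae_filter_eq_bot_iff trivial_limit_def by metis
  then show False using assms by (simp add: emeasure_restrict_space)
qed

definition Phi :: "real \<Rightarrow> real \<Rightarrow> real \<Rightarrow> (real \<Rightarrow> real) \<Rightarrow> real \<Rightarrow> real" where
  "Phi r a b h t = integral\<^sup>L (lebesgue_on {a..b}) (\<lambda>x. \<bar>h x - t\<bar> powr r)"

lemma Phi_nonneg: "Phi r a b h t \<ge> 0"
  unfolding Phi_def by (intro integral_nonneg_AE) auto

lemma Lr_norm_Phi: "Lr_norm r {a..b} (\<lambda>x. h x - t) = Phi r a b h t powr (1 / r)"
  by (simp add: Lr_norm_def Phi_def)

lemma min_iff:
  assumes r: "r > 1"
  shows "(\<forall>s. Lr_norm r {a..b} (\<lambda>x. h x - t) \<le> Lr_norm r {a..b} (\<lambda>x. h x - s))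
     \<longleftrightarrow> (\<forall>s. Phi r a b h t \<le> Phi r a b h s)"
proof -
  have "Phi r a b h t powr (1/r) \<le> Phi r a b h s powr (1/r) \<longleftrightarrow> Phi r a b h t \<le> Phi r a b h s" for s
  proof
    assume "Phi r a b h t powr (1/r) \<le> Phi r a b h s powr (1/r)"
    then show "Phi r a b h t \<le> Phi r a b h s"
      using powr_less_mono2[of "1/r" "Phi r a b h s" "Phi r a b h t"] r Phi_nonneg[of r a b h s]
      by force
  next
    assume "Phi r a b h t \<le> Phi r a b h s"
    then show "Phi r a b h t powr (1/r) \<le> Phi r a b h s powr (1/r)"
      using r Phi_nonneg[of r a b h t] by (intro powr_mono2) auto
  qed
  then show ?thesis by (simp add: Lr_norm_Phi)
qed

lemma Phi_convex:
  assumes r: "r > 1" and h: "in_Lr r {a..b} h"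
  shows "convex_on UNIV (Phi r a b h)"
proof (rule convex_onI)
  fix l s1 s2 :: real
  assume l: "0 < l" "l < 1"
  have "Phi r a b h ((1 - l) *\<^sub>R s1 + l *\<^sub>R s2) \<le>
     integral\<^sup>L (lebesgue_on {a..b}) (\<lambda>x. (1 - l) * \<bar>h x - s1\<bar> powr r + l * \<bar>h x - s2\<bar> powr r)"
    unfolding Phi_def
  proof (rule integral_mono)
    show "integrable (lebesgue_on {a..b}) (\<lambda>x. \<bar>h x - ((1 - l) *\<^sub>R s1 + l *\<^sub>R s2)\<bar> powr r)"
      by (rule int_shift'[OF r h])
    show "integrable (lebesgue_on {a..b}) (\<lambda>x. (1 - l) * \<bar>h x - s1\<bar> powr r + l * \<bar>h x - s2\<bar> powr r)"
      using int_shift'[OF r h] by auto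
    fix x
    have "\<bar>h x - ((1 - l) *\<^sub>R s1 + l *\<^sub>R s2)\<bar> = \<bar>(1 - l) * (h x - s1) + l * (h x - s2)\<bar>"
      by (simp add: algebra_simps)
    then show "\<bar>h x - ((1 - l) *\<^sub>R s1 + l *\<^sub>R s2)\<bar> powr r \<le> (1 - l) * \<bar>h x - s1\<bar> powr r + l * \<bar>h x - s2\<bar> powr r"
      using phi_convex[OF r, of l "h x - s1" "h x - s2"] l by simp
  qed
  also have "\<dots> = (1 - l) * Phi r a b h s1 + l * Phi r a b h s2"
    unfolding Phi_def using int_shift'[OF r h] by simp
  finally show "Phi r a b h ((1 - l) *\<^sub>R s1 + l *\<^sub>R s2) \<le> (1 - l) * Phi r a b h s1 + l * Phi r a b h s2" .
qed auto

lemma Phi_cont: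
  assumes r: "r > 1" and h: "in_Lr r {a..b} h"
  shows "continuous_on UNIV (Phi r a b h)"
  by (rule convex_on_continuous[OF open_UNIV Phi_convex[OF r h]])

lemma pos_set:
  assumes ab: "a < b" and h: "in_Lr r {a..b} h"
  obtains n :: nat where "measure (lebesgue_on {a..b}) {x \<in> {a..b}. \<bar>h x\<bar> \<le> real n} > 0"
proof -
  interpret finite_measure "lebesgue_on {a..b}" by (rule fin_M)
  have hm[measurable]: "h \<in> borel_measurable (lebesgue_on {a..b})" using h by (simp add: in_Lr_def)
  have "\<exists>n::nat. measure (lebesgue_on {a..b}) {x \<in> {a..b}. \<bar>h x\<bar> \<le> real n} \<noteq> 0"
  proof (rule ccontr)
    assume "\<not> ?thesis"
    then have z: "\<And>n::nat. measure (lebesgue_on {a..b}) {x \<in> {a..b}. \<bar>h x\<bar> \<le> real n} = 0" by blast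
    have "AE x in lebesgue_on {a..b}. x \<notin> {x \<in> {a..b}. \<bar>h x\<bar> \<le> real n}" for n :: nat
    proof (rule AE_not_in)
      have "{x \<in> {a..b}. \<bar>h x\<bar> \<le> real n} \<in> sets (lebesgue_on {a..b})"
      proof -
        have "{x \<in> space (lebesgue_on {a..b}). \<bar>h x\<bar> \<le> real n} \<in> sets (lebesgue_on {a..b})" by measurable
        then show ?thesis by simp
      qed
      then show "{x \<in> {a..b}. \<bar>h x\<bar> \<le> real n} \<in> null_sets (lebesgue_on {a..b})"
        using z[of n] by (simp add: emeasure_eq_measure null_sets_def)
    qed
    then have "\<forall>n::nat. AE x in lebesgue_on {a..b}. x \<notin> {x \<in> {a..b}. \<bar>h x\<bar> \<le> real n}"
      by blast
    then have "AE x in lebesgue_on {a..b}. \<forall>n::nat. x \<notin> {x \<in> {a..b}. \<bar>h x\<bar> \<le> real n}"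
      by (rule AE_all_countable[THEN iffD2])
    then have "AE x in lebesgue_on {a..b}. False"
    proof (rule AE_mp)
      show "AE x in lebesgue_on {a..b}. (\<forall>n::nat. x \<notin> {x \<in> {a..b}. \<bar>h x\<bar> \<le> real n}) \<longrightarrow> False"
      proof (rule AE_I2)
        fix x assume x: "x \<in> space (lebesgue_on {a..b})"
        obtain n :: nat where "\<bar>h x\<bar> \<le> real n" using real_arch_simple by blast
        then show "(\<forall>n::nat. x \<notin> {x \<in> {a..b}. \<bar>h x\<bar> \<le> real n}) \<longrightarrow> False" using x by auto
      qed
    qed
    then show False using not_AE_False[OF ab] by blast
  qed
  then obtain n :: nat where "measure (lebesgue_on {a..b}) {x \<in> {a..b}. \<bar>h x\<bar> \<le> real n} \<noteq> 0" by blast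
  moreover have "measure (lebesgue_on {a..b}) {x \<in> {a..b}. \<bar>h x\<bar> \<le> real n} \<ge> 0"
    by (rule measure_nonneg)
  ultimately have "measure (lebesgue_on {a..b}) {x \<in> {a..b}. \<bar>h x\<bar> \<le> real n} > 0"
    by (simp add: less_le)
  then show ?thesis by (rule that)
qed

lemma Phi_lower:
  assumes ab: "a < b" and r: "r > 1" and h: "in_Lr r {a..b} h"
    and A: "A = {x \<in> {a..b}. \<bar>h x\<bar> \<le> real n}" and t: "\<bar>t\<bar> \<ge> real n"
  shows "Phi r a b h t \<ge> measure (lebesgue_on {a..b}) A * (\<bar>t\<bar> - real n) powr r"
proof -
  interpret finite_measure "lebesgue_on {a..b}" by (rule fin_M)
  have hm[measurable]: "h \<in> borel_measurable (lebesgue_on {a..b})" using h by (simp add: in_Lr_def)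
  have As: "A \<in> sets (lebesgue_on {a..b})"
  proof -
    have "{x \<in> space (lebesgue_on {a..b}). \<bar>h x\<bar> \<le> real n} \<in> sets (lebesgue_on {a..b})" by measurable
    then show ?thesis by (simp add: A)
  qed
  have "integral\<^sup>L (lebesgue_on {a..b}) (\<lambda>x. indicator A x * (\<bar>t\<bar> - real n) powr r)
      \<le> Phi r a b h t"
    unfolding Phi_def
  proof (rule integral_mono)
    show "integrable (lebesgue_on {a..b}) (\<lambda>x. indicator A x * (\<bar>t\<bar> - real n) powr r)"
      using As emeasure_finite[of A] by (intro integrable_mult_left integrable_real_indicator) (auto simp: less_top[symmetric])
    show "integrable (lebesgue_on {a..b}) (\<lambda>x. \<bar>h x - t\<bar> powr r)" by (rule int_shift'[OF r h])
    fix x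
    show "indicator A x * (\<bar>t\<bar> - real n) powr r \<le> \<bar>h x - t\<bar> powr r"
    proof (cases "x \<in> A")
      case True
      then have "\<bar>t\<bar> - real n \<le> \<bar>h x - t\<bar>" using A by auto
      then show ?thesis using True t r by (auto intro!: powr_mono2)
    qed auto
  qed
  moreover have "integral\<^sup>L (lebesgue_on {a..b}) (\<lambda>x. indicator A x * (\<bar>t\<bar> - real n) powr r)
     = measure (lebesgue_on {a..b}) A * (\<bar>t\<bar> - real n) powr r"
  proof -
    have "A \<inter> {a..b} = A" using A by auto
    then show ?thesis using As by simp
  qed
  ultimately show ?thesis by linarith
qed

lemma Phi_min_exists:
  assumes ab: "a < b" and r: "r > 1" and h: "in_Lr r {a..b} h"
  shows "\<exists>t. \<forall>s. Phi r a b h t \<le> Phi r a b h s"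
proof -
  obtain n :: nat where mpos: "measure (lebesgue_on {a..b}) {x \<in> {a..b}. \<bar>h x\<bar> \<le> real n} > 0"
    using pos_set[OF ab h] by blast
  define A where "A = {x \<in> {a..b}. \<bar>h x\<bar> \<le> real n}"
  define m where "m = measure (lebesgue_on {a..b}) A"
  have m: "m > 0" using mpos by (simp add: m_def A_def)
  define R where "R = real n + 1 + Phi r a b h 0 / m"
  have R: "R \<ge> real n + 1" using m Phi_nonneg[of r a b h 0] by (simp add: R_def)
  have cmp: "compact {-R..R}" by simp
  have ne: "{-R..R} \<noteq> {}" using R by simp
  have cont: "continuous_on {-R..R} (Phi r a b h)"
    by (rule continuous_on_subset[OF Phi_cont[OF r h] subset_UNIV])
  obtain t0 where t0: "t0 \<in> {-R..R}" "\<And>y. y \<in> {-R..R} \<Longrightarrow> Phi r a b h t0 \<le> Phi r a b h y"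
    using continuous_attains_inf[OF cmp ne cont] by blast
  have "Phi r a b h t0 \<le> Phi r a b h s" for s
  proof (cases "s \<in> {-R..R}")
    case True then show ?thesis using t0 by blast
  next
    case False
    then have sR: "\<bar>s\<bar> > R" by auto
    have "Phi r a b h t0 \<le> Phi r a b h 0" using t0 R by simp
    also have "Phi r a b h 0 < m * (\<bar>s\<bar> - real n)"
    proof -
      have "m * (\<bar>s\<bar> - real n) > m * (R - real n)" using sR m by simp
      moreover have "m * (R - real n) = m + Phi r a b h 0" using m by (simp add: R_def field_simps)
      ultimately show ?thesis using m by linarith
    qed
    also have "\<dots> \<le> m * (\<bar>s\<bar> - real n) powr r"
    proof -
      have "\<bar>s\<bar> - real n \<ge> 1" using sR R by linarith
      then have "(\<bar>s\<bar> - real n) powr 1 \<le> (\<bar>s\<bar> - real n) powr r" using r by (intro powr_mono) auto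
      then show ?thesis using m \<open>\<bar>s\<bar> - real n \<ge> 1\<close> by simp
    qed
    also have "\<dots> \<le> Phi r a b h s"
      unfolding m_def using Phi_lower[OF ab r h A_def, of s] sR R by linarith
    finally show ?thesis by linarith
  qed
  then show ?thesis by blast
qed

lemma Phi_min_unique:
  assumes ab: "a < b" and r: "r > 1" and h: "in_Lr r {a..b} h"
    and t1: "\<forall>s. Phi r a b h t1 \<le> Phi r a b h s" and t2: "\<forall>s. Phi r a b h t2 \<le> Phi r a b h s"
  shows "t1 = t2"
proof (rule ccontr)
  assume ne: "t1 \<noteq> t2"
  define m where "m = (t1 + t2) / 2"
  define D where "D = (\<lambda>x. (\<bar>h x - t1\<bar> powr r + \<bar>h x - t2\<bar> powr r) / 2 - \<bar>h x - m\<bar> powr r)"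
  have Dpos: "D x > 0" for x
  proof -
    have e: "h x - m = ((h x - t1) + (h x - t2)) / 2" by (simp add: m_def field_simps)
    have "\<bar>h x - m\<bar> powr r < (\<bar>h x - t1\<bar> powr r + \<bar>h x - t2\<bar> powr r) / 2"
      unfolding e by (rule phi_mid_strict[OF r]) (use ne in simp)
    then show ?thesis unfolding D_def by linarith
  qed
  have Dint: "integrable (lebesgue_on {a..b}) D"
    unfolding D_def using int_shift'[OF r h] by auto
  have "integral\<^sup>L (lebesgue_on {a..b}) D = (Phi r a b h t1 + Phi r a b h t2) / 2 - Phi r a b h m"
    unfolding D_def Phi_def using int_shift'[OF r h] by simp
  also have "\<dots> \<le> 0"
  proof -
    have "Phi r a b h t1 \<le> Phi r a b h m" "Phi r a b h t2 \<le> Phi r a b h m"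
      using t1 t2 by blast+
    then show ?thesis by (simp add: field_simps)
  qed
  finally have le0: "integral\<^sup>L (lebesgue_on {a..b}) D \<le> 0" .
  have nn: "AE x in lebesgue_on {a..b}. 0 \<le> D x"
    by (intro AE_I2) (simp add: less_imp_le[OF Dpos])
  have "integral\<^sup>L (lebesgue_on {a..b}) D \<ge> 0" by (rule integral_nonneg_AE[OF nn])
  then have "integral\<^sup>L (lebesgue_on {a..b}) D = 0" using le0 by linarith
  then have D0: "AE x in lebesgue_on {a..b}. D x = 0"
    using integral_nonneg_eq_0_iff_AE[OF Dint nn] by blast
  have "AE x in lebesgue_on {a..b}. D x = 0 \<longrightarrow> False"
    by (intro AE_I2) (metis Dpos less_irrefl)
  then have "AE x in lebesgue_on {a..b}. False" using D0 by (rule AE_mp[rotated])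
  then show False using not_AE_False[OF ab] by blast
qed

lemma tau_char:
  assumes ab: "a < b" and r: "r > 1" and h: "in_Lr r {a..b} h"
    and t: "\<forall>s. Phi r a b h t \<le> Phi r a b h s"
  shows "tau r {a..b} h = t"
  unfolding tau_def
proof (rule the_equality)
  show "\<forall>s. Lr_norm r {a..b} (\<lambda>x. h x - t) \<le> Lr_norm r {a..b} (\<lambda>x. h x - s)"
    using min_iff[OF r] t by blast
  fix t' assume "\<forall>s. Lr_norm r {a..b} (\<lambda>x. h x - t') \<le> Lr_norm r {a..b} (\<lambda>x. h x - s)"
  then have "\<forall>s. Phi r a b h t' \<le> Phi r a b h s" using min_iff[OF r] by blast
  then show "t' = t" using Phi_min_unique[OF ab r h _ t] by blast
qed

lemma tau_min:
  assumes ab: "a < b" and r: "r > 1" and h: "in_Lr r {a..b} h"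
  shows "\<forall>s. Phi r a b h (tau r {a..b} h) \<le> Phi r a b h s"
proof -
  obtain t where t: "\<forall>s. Phi r a b h t \<le> Phi r a b h s" using Phi_min_exists[OF ab r h] by blast
  then show ?thesis using tau_char[OF ab r h t] by simp
qed

lemma tau_mono:
  assumes ab: "a < b" and r: "r > 1" and f: "in_Lr r {a..b} f" and g: "in_Lr r {a..b} g"
    and fg: "AE x in lebesgue_on {a..b}. f x \<le> g x"
  shows "tau r {a..b} f \<le> tau r {a..b} g"
proof (rule ccontr)
  define tf where "tf = tau r {a..b} f"
  define tg where "tg = tau r {a..b} g"
  assume "\<not> tau r {a..b} f \<le> tau r {a..b} g"
  then have lt: "tg < tf" by (simp add: tf_def tg_def)
  have mf: "\<forall>s. Phi r a b f tf \<le> Phi r a b f s" unfolding tf_def by (rule tau_min[OF ab r f])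
  have mg: "\<forall>s. Phi r a b g tg \<le> Phi r a b g s" unfolding tg_def by (rule tau_min[OF ab r g])
  have strict: "Phi r a b f tf < Phi r a b f tg"
  proof (rule ccontr)
    assume "\<not> ?thesis"
    then have "\<forall>s. Phi r a b f tg \<le> Phi r a b f s" using mf by (meson not_less order_trans)
    then have "tg = tf" using Phi_min_unique[OF ab r f _ mf] by blast
    then show False using lt by simp
  qed
  have "integral\<^sup>L (lebesgue_on {a..b}) (\<lambda>x. \<bar>f x - tg\<bar> powr r + \<bar>g x - tf\<bar> powr r)
     \<le> integral\<^sup>L (lebesgue_on {a..b}) (\<lambda>x. \<bar>f x - tf\<bar> powr r + \<bar>g x - tg\<bar> powr r)"
  proof (rule integral_mono_AE)
    show "integrable (lebesgue_on {a..b}) (\<lambda>x. \<bar>f x - tg\<bar> powr r + \<bar>g x - tf\<bar> powr r)"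
      using int_shift'[OF r f] int_shift'[OF r g] by auto
    show "integrable (lebesgue_on {a..b}) (\<lambda>x. \<bar>f x - tf\<bar> powr r + \<bar>g x - tg\<bar> powr r)"
      using int_shift'[OF r f] int_shift'[OF r g] by auto
    show "AE x in lebesgue_on {a..b}. \<bar>f x - tg\<bar> powr r + \<bar>g x - tf\<bar> powr r
        \<le> \<bar>f x - tf\<bar> powr r + \<bar>g x - tg\<bar> powr r"
      using fg proof (rule AE_mp[OF _ AE_I2], intro impI)
      fix x assume "f x \<le> g x"
      then show "\<bar>f x - tg\<bar> powr r + \<bar>g x - tf\<bar> powr r \<le> \<bar>f x - tf\<bar> powr r + \<bar>g x - tg\<bar> powr r"
        using phi_submod[OF r, of "f x" "g x" tg tf] lt by simp
    qed
  qed
  then have "Phi r a b f tg + Phi r a b g tf \<le> Phi r a b f tf + Phi r a b g tg"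
    unfolding Phi_def using int_shift'[OF r f] int_shift'[OF r g] by simp
  moreover have "Phi r a b g tg \<le> Phi r a b g tf" using mg by blast
  ultimately show False using strict by linarith
qed

lemma first_order_left:
  assumes r: "r > 1" and h: "in_Lr r {a..b} h"
    and t: "\<forall>s. Phi r a b h t \<le> Phi r a b h s" and e: "e > 0"
  shows "integral\<^sup>L (lebesgue_on {a..b}) (\<lambda>x. psi r (h x + (e - t))) \<ge> 0"
proof -
  define I where "I = integral\<^sup>L (lebesgue_on {a..b}) (\<lambda>x. psi r (h x + (e - t)))"
  have "integral\<^sup>L (lebesgue_on {a..b}) (\<lambda>x. \<bar>h x - (t - e)\<bar> powr r - (r * e) * psi r (h x + (e - t)))
     \<le> Phi r a b h t"
    unfolding Phi_def
  proof (rule integral_mono)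
    show "integrable (lebesgue_on {a..b}) (\<lambda>x. \<bar>h x - (t - e)\<bar> powr r - (r * e) * psi r (h x + (e - t)))"
      using int_shift'[OF r h] int_psi[OF r h] by auto
    show "integrable (lebesgue_on {a..b}) (\<lambda>x. \<bar>h x - t\<bar> powr r)" by (rule int_shift'[OF r h])
    fix x
    have "\<bar>h x - t\<bar> powr r \<ge> \<bar>h x + (e - t)\<bar> powr r + r * psi r (h x + (e - t)) * ((h x - t) - (h x + (e - t)))"
      by (rule phi_grad[OF r])
    moreover have "h x + (e - t) = h x - (t - e)" by simp
    ultimately show "\<bar>h x - (t - e)\<bar> powr r - (r * e) * psi r (h x + (e - t)) \<le> \<bar>h x - t\<bar> powr r"
      by (simp add: algebra_simps)
  qed
  moreover have "integral\<^sup>L (lebesgue_on {a..b}) (\<lambda>x. \<bar>h x - (t - e)\<bar> powr r - (r * e) * psi r (h x + (e - t)))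
     = Phi r a b h (t - e) - (r * e) * I"
    unfolding Phi_def I_def using int_shift'[OF r h] int_psi[OF r h] by simp
  moreover have "Phi r a b h t \<le> Phi r a b h (t - e)" using t by blast
  ultimately have "(r * e) * I \<ge> 0" by linarith
  moreover have "r * e > 0" using r e by simp
  ultimately show ?thesis unfolding I_def by (metis not_le mult_pos_neg)
qed

lemma first_order_right:
  assumes r: "r > 1" and h: "in_Lr r {a..b} h"
    and t: "\<forall>s. Phi r a b h t \<le> Phi r a b h s" and e: "e > 0"
  shows "integral\<^sup>L (lebesgue_on {a..b}) (\<lambda>x. psi r (h x + (- t - e))) \<le> 0"
proof -
  define I where "I = integral\<^sup>L (lebesgue_on {a..b}) (\<lambda>x. psi r (h x + (- t - e)))"
  have "integral\<^sup>L (lebesgue_on {a..b}) (\<lambda>x. \<bar>h x - (t + e)\<bar> powr r + (r * e) * psi r (h x + (- t - e)))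
     \<le> Phi r a b h t"
    unfolding Phi_def
  proof (rule integral_mono)
    show "integrable (lebesgue_on {a..b}) (\<lambda>x. \<bar>h x - (t + e)\<bar> powr r + (r * e) * psi r (h x + (- t - e)))"
      using int_shift'[OF r h] int_psi[OF r h] by auto
    show "integrable (lebesgue_on {a..b}) (\<lambda>x. \<bar>h x - t\<bar> powr r)" by (rule int_shift'[OF r h])
    fix x
    have "\<bar>h x - t\<bar> powr r \<ge> \<bar>h x + (- t - e)\<bar> powr r + r * psi r (h x + (- t - e)) * ((h x - t) - (h x + (- t - e)))"
      by (rule phi_grad[OF r])
    moreover have "h x + (- t - e) = h x - (t + e)" by simp
    ultimately show "\<bar>h x - (t + e)\<bar> powr r + (r * e) * psi r (h x + (- t - e)) \<le> \<bar>h x - t\<bar> powr r"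
      by (simp add: algebra_simps)
  qed
  moreover have "integral\<^sup>L (lebesgue_on {a..b}) (\<lambda>x. \<bar>h x - (t + e)\<bar> powr r + (r * e) * psi r (h x + (- t - e)))
     = Phi r a b h (t + e) + (r * e) * I"
    unfolding Phi_def I_def using int_shift'[OF r h] int_psi[OF r h] by simp
  moreover have "Phi r a b h t \<le> Phi r a b h (t + e)" using t by blast
  ultimately have "(r * e) * I \<le> 0" by linarith
  moreover have "r * e > 0" using r e by simp
  ultimately show ?thesis unfolding I_def by (metis not_le mult_pos_pos)
qed

lemma psi_limit:
  assumes r: "r > 1" and h: "in_Lr r {a..b} h"
    and c: "c \<longlonglongrightarrow> c0" and K: "\<And>n. \<bar>c n\<bar> \<le> K"
  shows "(\<lambda>n. integral\<^sup>L (lebesgue_on {a..b}) (\<lambda>x. psi r (h x + c n)))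
     \<longlonglongrightarrow> integral\<^sup>L (lebesgue_on {a..b}) (\<lambda>x. psi r (h x + c0))"
proof (rule integral_dominated_convergence[where w = "\<lambda>x. 1 + \<bar>\<bar>h x\<bar> + K\<bar> powr r"])
  have hm[measurable]: "h \<in> borel_measurable (lebesgue_on {a..b})" using h by (simp add: in_Lr_def)
  have habs: "in_Lr r {a..b} (\<lambda>x. \<bar>h x\<bar>)" using h by (simp add: in_Lr_def)
  interpret finite_measure "lebesgue_on {a..b}" by (rule fin_M)
  show "(\<lambda>x. psi r (h x + c0)) \<in> borel_measurable (lebesgue_on {a..b})" by measurable
  show "(\<lambda>x. psi r (h x + c n)) \<in> borel_measurable (lebesgue_on {a..b})" for n by measurable
  show "integrable (lebesgue_on {a..b}) (\<lambda>x. 1 + \<bar>\<bar>h x\<bar> + K\<bar> powr r)"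
    using int_shift[OF r habs, of K] by (intro Bochner_Integration.integrable_add) auto
  show "AE x in lebesgue_on {a..b}. (\<lambda>n. psi r (h x + c n)) \<longlonglongrightarrow> psi r (h x + c0)"
  proof (rule AE_I2)
    fix x
    have "isCont (psi r) (h x + c0)"
      using psi_cont[OF r] by (simp add: continuous_on_eq_continuous_at)
    then show "(\<lambda>n. psi r (h x + c n)) \<longlonglongrightarrow> psi r (h x + c0)"
      by (rule isCont_tendsto_compose) (intro tendsto_intros c)
  qed
  show "AE x in lebesgue_on {a..b}. norm (psi r (h x + c n)) \<le> 1 + \<bar>\<bar>h x\<bar> + K\<bar> powr r" for n
  proof (rule AE_I2)
    fix x
    have K0: "K \<ge> 0" using K[of 0] by linarith
    have "\<bar>h x + c n\<bar> \<le> \<bar>h x\<bar> + K" using K[of n] by linarith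
    then have "\<bar>h x + c n\<bar> powr (r - 1) \<le> (\<bar>h x\<bar> + K) powr (r - 1)"
      using r by (intro powr_mono2) auto
    also have "\<dots> \<le> 1 + (\<bar>h x\<bar> + K) powr r" using powr_m1_bound[OF r, of "\<bar>h x\<bar> + K"] K0 by simp
    finally show "norm (psi r (h x + c n)) \<le> 1 + \<bar>\<bar>h x\<bar> + K\<bar> powr r"
      using K0 by (simp add: psi_abs[OF r])
  qed
qed

theorem proposition4:
  fixes a b r :: real and f g :: "real \<Rightarrow> real"
  assumes "a < b" and "r > 1"
    and "in_Lr r {a..b} f" and "in_Lr r {a..b} g"
    and "AE x in lebesgue_on {a..b}. f x \<le> g x"
  shows "tau r {a..b} f \<le> tau r {a..b} g \<and>
    (tau r {a..b} f = tau r {a..b} g \<longleftrightarrow> (AE x in lebesgue_on {a..b}. f x = g x))"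
proof -
  note ab = assms(1) and r = assms(2) and f = assms(3) and g = assms(4) and fg = assms(5)
  have fm[measurable]: "f \<in> borel_measurable (lebesgue_on {a..b})" using f by (simp add: in_Lr_def)
  have gm[measurable]: "g \<in> borel_measurable (lebesgue_on {a..b})" using g by (simp add: in_Lr_def)
  have "tau r {a..b} f = tau r {a..b} g \<longleftrightarrow> (AE x in lebesgue_on {a..b}. f x = g x)"
  proof
    assume eq: "AE x in lebesgue_on {a..b}. f x = g x"
    have PP: "Phi r a b f s = Phi r a b g s" for s
      unfolding Phi_def
      by (rule integral_cong_AE) (auto intro: AE_mp[OF eq AE_I2])
    have "\<forall>s. Phi r a b g (tau r {a..b} f) \<le> Phi r a b g s"
      using tau_min[OF ab r f] PP by simp
    then show "tau r {a..b} f = tau r {a..b} g" using tau_char[OF ab r g] by metis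
  next
    assume eq: "tau r {a..b} f = tau r {a..b} g"
    define t where "t = tau r {a..b} f"
    have mf: "\<forall>s. Phi r a b f t \<le> Phi r a b f s" unfolding t_def by (rule tau_min[OF ab r f])
    have mg: "\<forall>s. Phi r a b g t \<le> Phi r a b g s" unfolding t_def eq by (rule tau_min[OF ab r g])
    define e where "e = (\<lambda>n::nat. inverse (real (Suc n)))"
    have e0: "e \<longlonglongrightarrow> 0" unfolding e_def by (rule LIMSEQ_inverse_real_of_nat)
    have epos: "e n > 0" for n by (simp add: e_def)
    have ele: "e n \<le> 1" for n unfolding e_def by (rule inverse_le_1_iff[THEN iffD2]) auto
    have Lf: "(\<lambda>n. integral\<^sup>L (lebesgue_on {a..b}) (\<lambda>x. psi r (f x + (e n - t))))
       \<longlonglongrightarrow> integral\<^sup>L (lebesgue_on {a..b}) (\<lambda>x. psi r (f x + - t))"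
    proof (rule psi_limit[OF r f])
      show "(\<lambda>n. e n - t) \<longlonglongrightarrow> - t" using tendsto_diff[OF e0 tendsto_const[of t]] by simp
      show "\<bar>e n - t\<bar> \<le> \<bar>t\<bar> + 1" for n using epos[of n] ele[of n] by linarith
    qed
    have Lg: "(\<lambda>n. integral\<^sup>L (lebesgue_on {a..b}) (\<lambda>x. psi r (g x + (- t - e n))))
       \<longlonglongrightarrow> integral\<^sup>L (lebesgue_on {a..b}) (\<lambda>x. psi r (g x + - t))"
    proof (rule psi_limit[OF r g])
      show "(\<lambda>n. - t - e n) \<longlonglongrightarrow> - t" using tendsto_diff[OF tendsto_const[of "-t"] e0] by simp
      show "\<bar>- t - e n\<bar> \<le> \<bar>t\<bar> + 1" for n using epos[of n] ele[of n] by linarith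
    qed
    have If: "integral\<^sup>L (lebesgue_on {a..b}) (\<lambda>x. psi r (f x + - t)) \<ge> 0"
      by (rule LIMSEQ_le_const[OF Lf]) (use first_order_left[OF r f mf epos] in blast)
    have Ig: "integral\<^sup>L (lebesgue_on {a..b}) (\<lambda>x. psi r (g x + - t)) \<le> 0"
      by (rule LIMSEQ_le_const2[OF Lg]) (use first_order_right[OF r g mg epos] in blast)
    define D where "D = (\<lambda>x. psi r (g x + - t) - psi r (f x + - t))"
    have Dint: "integrable (lebesgue_on {a..b}) D"
      unfolding D_def by (intro Bochner_Integration.integrable_diff int_psi[OF r f] int_psi[OF r g])
    have nn: "AE x in lebesgue_on {a..b}. 0 \<le> D x"
      using fg by (rule AE_mp[OF _ AE_I2]) (auto simp: D_def intro!: psi_mono[OF r])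
    have "integral\<^sup>L (lebesgue_on {a..b}) D \<le> 0"
      unfolding D_def
      using Bochner_Integration.integral_diff[OF int_psi[OF r g, of "-t"] int_psi[OF r f, of "-t"]] If Ig
      by linarith
    moreover have "integral\<^sup>L (lebesgue_on {a..b}) D \<ge> 0" by (rule integral_nonneg_AE[OF nn])
    ultimately have "integral\<^sup>L (lebesgue_on {a..b}) D = 0" by linarith
    then have D0: "AE x in lebesgue_on {a..b}. D x = 0"
      using integral_nonneg_eq_0_iff_AE[OF Dint nn] by blast
    have "AE x in lebesgue_on {a..b}. f x \<le> g x \<and> D x = 0" using fg D0 by auto
    then show "AE x in lebesgue_on {a..b}. f x = g x"
    proof (rule AE_mp[OF _ AE_I2], intro impI)
      fix x assume x: "f x \<le> g x \<and> D x = 0"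
      show "f x = g x"
      proof (rule ccontr)
        assume "f x \<noteq> g x"
        then have "f x + - t < g x + - t" using x by simp
        then have "psi r (f x + - t) < psi r (g x + - t)" by (rule psi_mono_strict[OF r])
        then show False using x by (simp add: D_def)
      qed
    qed
  qed
  then show ?thesis using tau_mono[OF ab r f g fg] by blast
qed

end
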